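(* If $x$ is a regular point of $V_{\bf f}$, i.e. $\operatorname{rank}(\mathrm{Jac}_{\bf f}(x))=\operatorname{codim}_x(V_{\bf f})$, then $\mathcal{R}^{ed}_{\bf f}$ contains an open neighborhood of $x$ in $\mathbb{R}^n$.
   Context: Let ${\bf f}=(f_1,\dots,f_m)$ with $f_i(x)=x^TA_ix+2a_i^Tx+\alpha_i$ ($A_i$ real symmetric $n\times n$, $a_i\in\mathbb{R}^n$, $\alpha_i\in\mathbb{R}$), $V_{\bf f}=\{x\in\mathbb{R}^n:f_i(x)=0\ \forall i\}$, and $\mathrm{Jac}_{\bf f}(x)$ the $n\times m$ Jacobian with $(i,j)$ entry $\partial f_j/\partial x_i$. The SDP-exact region of the Euclidean distance problem is $\mathcal{R}^{ed}_{\bf f}=\{u\in\mathbb{R}^n:\exists x\in V_{\bf f},\lambda\in\mathbb{R}^m \text{ with } I_n-\sum_i\lambda_iA_i\succ0 \text{ and } -u-\sum_i\lambda_ia_i+(I_n-\sum_i\lambda_iA_i)x=0\}$. *)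

theory Defs
  imports "HOL-Analysis.Analysis"
begin

definition quad :: "real^'n^'n \<Rightarrow> real^'n \<Rightarrow> real \<Rightarrow> real^'n \<Rightarrow> real" where
  "quad A a \<alpha> x = x \<bullet> (A *v x) + 2 * (a \<bullet> x) + \<alpha>"

definition fsys :: "('m \<Rightarrow> real^'n^'n) \<Rightarrow> ('m \<Rightarrow> real^'n) \<Rightarrow> ('m \<Rightarrow> real) \<Rightarrow> real^'n \<Rightarrow> real^'m" where
  "fsys A a \<alpha> x = (\<chi> i. quad (A i) (a i) (\<alpha> i) x)"

definition variety :: "('m \<Rightarrow> real^'n^'n) \<Rightarrow> ('m \<Rightarrow> real^'n) \<Rightarrow> ('m \<Rightarrow> real) \<Rightarrow> (real^'n) set" where
  "variety A a \<alpha> = {x. \<forall>i. quad (A i) (a i) (\<alpha> i) x = 0}"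

text \<open>n x m Jacobian: entry (k,j) = d f_j / d x_k (transpose of the library jacobian).\<close>
definition Jac :: "('m \<Rightarrow> real^'n^'n) \<Rightarrow> ('m \<Rightarrow> real^'n) \<Rightarrow> ('m \<Rightarrow> real) \<Rightarrow> real^'n \<Rightarrow> real^'m^'n" where
  "Jac A a \<alpha> x = transpose (jacobian (fsys A a \<alpha>) (at x))"

definition pos_def :: "real^'n^'n \<Rightarrow> bool" where
  "pos_def M \<longleftrightarrow> transpose M = M \<and> (\<forall>v. v \<noteq> 0 \<longrightarrow> v \<bullet> (M *v v) > 0)"

definition ed_region :: "('m::finite \<Rightarrow> real^'n^'n) \<Rightarrow> ('m \<Rightarrow> real^'n) \<Rightarrow> ('m \<Rightarrow> real) \<Rightarrow> (real^'n) set" where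
  "ed_region A a \<alpha> = {u. \<exists>x \<in> variety A a \<alpha>. \<exists>lam::'m \<Rightarrow> real.
      pos_def (mat 1 - (\<Sum>i\<in>UNIV. lam i *\<^sub>R A i)) \<and>
      - u - (\<Sum>i\<in>UNIV. lam i *\<^sub>R a i) + (mat 1 - (\<Sum>i\<in>UNIV. lam i *\<^sub>R A i)) *v x = 0}"

text \<open>Local dimension of a set V at a point x: the largest d such that every neighbourhood
  of x contains a subset of V homeomorphic to a nonempty open subset of a d-dimensional
  linear subspace (for semialgebraic sets this is the semialgebraic local dimension).\<close>
definition local_dim :: "(real^'n) set \<Rightarrow> real^'n \<Rightarrow> nat" where
  "local_dim V x = (GREATEST d. \<forall>e>0. \<exists>S \<subseteq> V \<inter> ball x e. \<exists>(W::(real^'n) set) T.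
      subspace W \<and> dim W = d \<and> openin (top_of_set W) T \<and> T \<noteq> {} \<and> T homeomorphic S)"

definition local_codim :: "(real^'n) set \<Rightarrow> real^'n \<Rightarrow> nat" where
  "local_codim V x = CARD('n) - local_dim V x"

end

theory Submission
  imports Defs "HOL-Complex_Analysis.Conformal_Mappings"
begin

definition cv :: "real^'n \<Rightarrow> complex^'n" where "cv y = (\<chi> k. complex_of_real (y$k))"
definition rv :: "complex^'n \<Rightarrow> real^'n" where "rv z = (\<chi> k. Re (z$k))"
definition iv :: "complex^'n \<Rightarrow> real^'n" where "iv z = (\<chi> k. Im (z$k))"
definition cj :: "complex^'n \<Rightarrow> complex^'n" where "cj z = (\<chi> k. cnj (z$k))"
definition cdot :: "real^'n \<Rightarrow> complex^'n \<Rightarrow> complex" where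
  "cdot e z = (\<Sum>k\<in>UNIV. complex_of_real (e$k) * z$k)"
definition cmv :: "real^'n^'n \<Rightarrow> complex^'n \<Rightarrow> complex^'n" where
  "cmv A z = (\<chi> k. cdot (A$k) z)"
definition qc :: "real^'n^'n \<Rightarrow> real^'n \<Rightarrow> real \<Rightarrow> complex^'n \<Rightarrow> complex" where
  "qc A a \<alpha> z = (\<Sum>k\<in>UNIV. z$k * cmv A z $ k) + 2 * cdot a z + complex_of_real \<alpha>"
definition dqc :: "real^'n^'n \<Rightarrow> real^'n \<Rightarrow> complex^'n \<Rightarrow> complex^'n \<Rightarrow> complex" where
  "dqc A a z h = (\<Sum>k\<in>UNIV. h$k * cmv A z $ k) + (\<Sum>k\<in>UNIV. z$k * cmv A h $ k) + 2 * cdot a h"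

lemma cv_add: "cv (x + y) = cv x + cv y" by (simp add: cv_def vec_eq_iff)
lemma cv_diff: "cv (x - y) = cv x - cv y" by (simp add: cv_def vec_eq_iff)
lemma cv_scaleR: "cv (c *\<^sub>R x) = complex_of_real c *s cv x" by (simp add: cv_def vec_eq_iff)
lemma cv_zero[simp]: "cv 0 = 0" by (simp add: cv_def vec_eq_iff)
lemma rv_cv[simp]: "rv (cv x) = x" by (simp add: cv_def rv_def vec_eq_iff)
lemma cv_inj: "cv x = cv y \<longleftrightarrow> x = y" by (metis rv_cv)
lemma cj_cv[simp]: "cj (cv x) = cv x" by (simp add: cv_def cj_def vec_eq_iff)
lemma cj_cj[simp]: "cj (cj z) = z" by (simp add: cj_def vec_eq_iff)
lemma cj_fixed: "cj z = z \<Longrightarrow> z = cv (rv z)"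
  by (auto simp: cj_def cv_def rv_def vec_eq_iff complex_eq_iff)
lemma decomp: "z = cv (rv z) + \<i> *s cv (iv z)"
  by (simp add: cv_def rv_def iv_def vec_eq_iff complex_eq_iff)

lemma rv_comb: "rv (cv u + \<i> *s cv w) = u" by (simp add: rv_def cv_def vec_eq_iff)
lemma iv_comb: "iv (cv u + \<i> *s cv w) = w" by (simp add: iv_def cv_def vec_eq_iff)

lemma bl_cv: "bounded_linear cv"
  by (rule bounded_linearI'; auto simp add: cv_def vec_eq_iff complex_eq_iff)
lemma bl_rv: "bounded_linear rv"
  by (rule bounded_linearI'; simp add: rv_def vec_eq_iff)
lemma bl_cdot: "bounded_linear (cdot e)"
  unfolding cdot_def
  by (intro bounded_linear_sum bounded_linear_mult_right[THEN bounded_linear_compose] bounded_linear_vec_nth) 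

lemma norm_cv: "norm (cv x) = norm x"
  by (simp add: cv_def norm_vec_def L2_set_def)
lemma norm_cj: "norm (cj z) = norm z"
  by (simp add: cj_def norm_vec_def L2_set_def)
lemma cj_diff: "cj (z - w) = cj z - cj w" by (simp add: cj_def vec_eq_iff)
lemma continuous_on_cv: "continuous_on S cv" by (intro linear_continuous_on bl_cv)
lemma continuous_on_rv: "continuous_on S rv" by (intro linear_continuous_on bl_rv)

lemma cmv_nth[simp]: "cmv A z $ k = cdot (A$k) z" by (simp add: cmv_def)
lemma hd_nth: "((\<lambda>z. z $ k) has_derivative (\<lambda>h. h $ k)) F"
  by (rule bounded_linear_imp_has_derivative[OF bounded_linear_vec_nth])
lemma hd_cdot: "((\<lambda>z. cdot e z) has_derivative cdot e) F"
  by (rule bounded_linear_imp_has_derivative[OF bl_cdot])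

lemma has_derivative_qc: "(qc A a \<alpha> has_derivative dqc A a z) (at z)"
proof -
  have 1: "((\<lambda>z. \<Sum>k\<in>UNIV. z$k * cdot (A$k) z) has_derivative
      (\<lambda>h. \<Sum>k\<in>UNIV. z$k * cdot (A$k) h + h$k * cdot (A$k) z)) (at z)"
    by (intro has_derivative_sum has_derivative_mult hd_nth hd_cdot)
  have 2: "((\<lambda>z. 2 * cdot a z + complex_of_real \<alpha>) has_derivative (\<lambda>h. 2 * cdot a h + 0)) (at z)"
    by (intro has_derivative_add has_derivative_mult_right hd_cdot has_derivative_const)
  have "((\<lambda>z. (\<Sum>k\<in>UNIV. z$k * cdot (A$k) z) + (2 * cdot a z + complex_of_real \<alpha>)) has_derivative
      (\<lambda>h. (\<Sum>k\<in>UNIV. z$k * cdot (A$k) h + h$k * cdot (A$k) z) + (2 * cdot a h + 0))) (at z)"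
    by (intro has_derivative_add 1 2)
  moreover have "(\<lambda>h. (\<Sum>k\<in>UNIV. z$k * cdot (A$k) h + h$k * cdot (A$k) z) + (2 * cdot a h + 0)) = dqc A a z"
    by (rule ext) (simp add: dqc_def sum.distrib algebra_simps)
  moreover have "(\<lambda>z. (\<Sum>k\<in>UNIV. z$k * cdot (A$k) z) + (2 * cdot a z + complex_of_real \<alpha>)) = qc A a \<alpha>"
    by (rule ext) (simp add: qc_def algebra_simps)
  ultimately show ?thesis by simp
qed

lemma cdot_smult: "cdot e (c *s h) = c * cdot e h"
  by (simp add: cdot_def sum_distrib_left algebra_simps)
lemma cdot_add: "cdot e (h + h') = cdot e h + cdot e h'"
  by (simp add: cdot_def sum.distrib algebra_simps)
lemma dqc_smult: "dqc A a z (c *s h) = c * dqc A a z h"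
  by (simp add: dqc_def cdot_smult sum_distrib_left algebra_simps)
lemma dqc_add: "dqc A a z (h + h') = dqc A a z h + dqc A a z h'"
  by (simp add: dqc_def cdot_add sum.distrib algebra_simps)

lemma cdot_cj: "cdot e (cj z) = cnj (cdot e z)"
  by (simp add: cdot_def cj_def)
lemma qc_cj: "qc A a \<alpha> (cj z) = cnj (qc A a \<alpha> z)"
  by (simp add: qc_def cdot_cj) (simp add: cj_def)
lemma cdot_cv: "cdot e (cv y) = complex_of_real (e \<bullet> y)"
  by (simp add: cdot_def cv_def inner_vec_def)
lemma qc_cv: "qc A a \<alpha> (cv y) = complex_of_real (quad A a \<alpha> y)"
  by (simp add: qc_def quad_def cdot_cv inner_vec_def matrix_vector_mult_def) (simp add: cv_def)

lemma sym_entry: "transpose A = A \<Longrightarrow> A$k$l = A$l$k"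
  by (metis transpose_def vec_lambda_beta)

lemma dqc_cv:
  assumes "transpose A = A"
  shows "dqc A a (cv x) (cv p) = complex_of_real (2 * ((A *v x + a) \<bullet> p))"
proof -
  have e1: "(\<Sum>k\<in>UNIV. x$k * ((A$k) \<bullet> p)) = (\<Sum>k\<in>UNIV. p$k * ((A$k) \<bullet> x))"
    unfolding inner_vec_def
    apply (simp add: sum_distrib_left sum_distrib_right)
    apply (subst sum.swap)
    apply (simp add: sym_entry[OF assms] algebra_simps)
    done
  have "dqc A a (cv x) (cv p) = complex_of_real ((\<Sum>k\<in>UNIV. p$k * ((A$k) \<bullet> x)) + (\<Sum>k\<in>UNIV. x$k * ((A$k) \<bullet> p)) + 2 * (a \<bullet> p))"
    by (simp add: dqc_def cdot_cv) (simp add: cv_def)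
  also have "\<dots> = complex_of_real (2 * ((A *v x + a) \<bullet> p))"
    by (simp add: e1 inner_add_left) (simp add: inner_vec_def matrix_vector_mult_def algebra_simps sum_distrib_right)
  finally show ?thesis .
qed

lemma cv_sum: "cv (sum f S) = (\<Sum>i\<in>S. cv (f i))"
  by (simp add: cv_def vec_eq_iff sum_component)
lemma cj_sum: "cj (sum f S) = (\<Sum>i\<in>S. cj (f i))"
  by (simp add: cj_def vec_eq_iff sum_component)
lemma cj_add: "cj (z + w) = cj z + cj w" by (simp add: cj_def vec_eq_iff)
lemma cj_smult_cv: "cj (c *s cv e) = cnj c *s cv e" by (simp add: cj_def cv_def vec_eq_iff)

lemma smult_of_real: "c *\<^sub>R (z::complex^'n) = complex_of_real c *s z"
  by (simp add: vec_eq_iff) (simp add: scaleR_conv_of_real)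

lemma cl_bl:
  fixes f :: "complex^'n \<Rightarrow> complex^'k"
  assumes "\<And>u v. f (u + v) = f u + f v" "\<And>c u. f (c *s u) = c *s f u"
  shows "bounded_linear f"
  by (rule bounded_linearI') (simp_all add: assms smult_of_real)

lemma bl_smult_const: "bounded_linear (\<lambda>t::complex. t *s (v::complex^'n))"
  apply (rule bounded_linearI')
   apply (simp add: vec_eq_iff algebra_simps)
  apply (simp add: vec_eq_iff)
  done

locale quadsys =
  fixes A :: "'m::finite \<Rightarrow> real^'n^'n" and a :: "'m \<Rightarrow> real^'n" and \<alpha> :: "'m \<Rightarrow> real"
    and x :: "real^'n" and g :: "'m \<Rightarrow> real^'n" and B0 :: "(real^'n) set"
  assumes sym: "\<And>i. transpose (A i) = A i"
    and xV: "x \<in> variety A a \<alpha>"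
    and g_def: "\<And>i. g i = A i *v x + a i"
    and B0span: "span B0 = span (range g)"
    and B0orth: "pairwise orthogonal B0" and B0norm: "\<And>e. e \<in> B0 \<Longrightarrow> norm e = 1"
    and B0fin: "finite B0"
begin

definition Pr :: "real^'n \<Rightarrow> real^'n" where "Pr h = h - (\<Sum>e\<in>B0. (e \<bullet> h) *\<^sub>R e)"
definition PrC :: "complex^'n \<Rightarrow> complex^'n" where "PrC z = z - (\<Sum>e\<in>B0. cdot e z *s cv e)"
definition PhiC :: "complex^'n \<Rightarrow> complex^'n" where
  "PhiC z = PrC z + (\<Sum>i\<in>UNIV. qc (A i) (a i) (\<alpha> i) z *s cv (g i))"
definition DPhi :: "complex^'n \<Rightarrow> complex^'n \<Rightarrow> complex^'n" where
  "DPhi z h = PrC h + (\<Sum>i\<in>UNIV. dqc (A i) (a i) z h *s cv (g i))"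
definition Phi :: "real^'n \<Rightarrow> real^'n" where
  "Phi y = Pr y + (\<Sum>i\<in>UNIV. quad (A i) (a i) (\<alpha> i) y *\<^sub>R g i)"
definition L :: "real^'n \<Rightarrow> real^'n" where
  "L p = Pr p + (\<Sum>i\<in>UNIV. (2 * (g i \<bullet> p)) *\<^sub>R g i)"

lemma PrC_cv: "PrC (cv p) = cv (Pr p)"
  by (simp add: PrC_def Pr_def cv_diff cv_sum cv_scaleR cdot_cv)
lemma PhiC_cv: "PhiC (cv y) = cv (Phi y)"
  by (simp add: PhiC_def Phi_def PrC_cv cv_add cv_sum cv_scaleR qc_cv)
lemma DPhi_cv: "DPhi (cv x) (cv p) = cv (L p)"
  by (simp add: DPhi_def L_def PrC_cv cv_add cv_sum cv_scaleR dqc_cv[OF sym] g_def)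
lemma PrC_cj: "PrC (cj z) = cj (PrC z)"
  by (simp add: PrC_def cj_diff cj_sum cj_smult_cv cdot_cj)
lemma PhiC_cj: "PhiC (cj z) = cj (PhiC z)"
  by (simp add: PhiC_def PrC_cj cj_add cj_sum cj_smult_cv qc_cj)
lemma PrC_smult: "PrC (c *s h) = c *s PrC h"
  by (simp add: PrC_def vec_eq_iff sum_component cdot_smult sum_distrib_left algebra_simps)
lemma PrC_add: "PrC (u + v) = PrC u + PrC v"
  by (simp add: PrC_def vec_eq_iff sum_component cdot_add sum.distrib algebra_simps)
lemma DPhi_smult: "DPhi z (c *s h) = c *s DPhi z h"
  by (simp add: DPhi_def PrC_smult dqc_smult vec_eq_iff sum_component sum_distrib_left algebra_simps)
lemma DPhi_add: "DPhi z (u + v) = DPhi z u + DPhi z v"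
  by (simp add: DPhi_def PrC_add dqc_add vec_eq_iff sum_component sum.distrib algebra_simps)
lemma bl_PrC: "bounded_linear PrC"
  by (rule cl_bl) (simp_all add: PrC_add PrC_smult)
lemma bl_DPhi: "bounded_linear (DPhi z)"
  by (rule cl_bl) (simp_all add: DPhi_add DPhi_smult)

lemma has_derivative_PhiC: "(PhiC has_derivative DPhi z) (at z)"
proof -
  have "((\<lambda>z. PrC z + (\<Sum>i\<in>UNIV. qc (A i) (a i) (\<alpha> i) z *s cv (g i))) has_derivative
        (\<lambda>h. PrC h + (\<Sum>i\<in>UNIV. dqc (A i) (a i) z h *s cv (g i)))) (at z)"
    by (intro has_derivative_add has_derivative_sum bounded_linear_imp_has_derivative[OF bl_PrC]
          bounded_linear.has_derivative[OF bl_smult_const] has_derivative_qc)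
  then show ?thesis unfolding PhiC_def[abs_def] DPhi_def[abs_def] .
qed

lemma g_in: "g i \<in> span B0" by (simp add: B0span span_base)
lemma B0_in: "e \<in> B0 \<Longrightarrow> e \<in> span (range g)" by (metis B0span span_base)

lemma Pr_orth_B0:
  assumes e: "e \<in> B0" shows "e \<bullet> Pr h = 0"
proof -
  have "(\<Sum>e'\<in>B0. (e' \<bullet> h) * (e \<bullet> e')) = (e \<bullet> h) * (e \<bullet> e) + (\<Sum>e'\<in>B0-{e}. (e' \<bullet> h) * (e \<bullet> e'))"
    using e B0fin by (simp add: sum.remove)
  also have "(\<Sum>e'\<in>B0-{e}. (e' \<bullet> h) * (e \<bullet> e')) = 0"
    using e B0orth by (intro sum.neutral) (auto simp: pairwise_def orthogonal_def)
  also have "e \<bullet> e = 1" using B0norm[OF e] by (simp add: dot_square_norm)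
  finally have "(\<Sum>e'\<in>B0. (e' \<bullet> h) * (e \<bullet> e')) = e \<bullet> h" by simp
  then show ?thesis by (simp add: Pr_def inner_diff_right inner_sum_right)
qed

lemma Pr_orth: "g i \<bullet> Pr h = 0"
proof -
  have "orthogonal (Pr h) (g i)"
    by (rule orthogonal_to_span[OF g_in]) (simp add: orthogonal_def Pr_orth_B0 inner_commute)
  then show ?thesis by (simp add: orthogonal_def inner_commute)
qed

lemma Pr_id: assumes "\<And>i. g i \<bullet> h = 0" shows "Pr h = h"
proof -
  have "e \<bullet> h = 0" if "e \<in> B0" for e
  proof -
    have "orthogonal h e"
      by (rule orthogonal_to_span[OF B0_in[OF that]]) (auto simp: orthogonal_def assms inner_commute[of h])
    then show ?thesis by (simp add: orthogonal_def inner_commute)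
  qed
  then show ?thesis by (simp add: Pr_def)
qed

lemma bl_Pr: "bounded_linear Pr"
  by (rule bounded_linearI') (simp_all add: Pr_def inner_add_right scaleR_add_left sum.distrib scaleR_diff_right scaleR_sum_right)

lemma L_inj: assumes "L p = 0" shows "p = 0"
proof -
  define G where "G = (\<Sum>i\<in>UNIV. (2 * (g i \<bullet> p)) *\<^sub>R g i)"
  have PG: "Pr p \<bullet> G = 0"
    by (simp add: G_def inner_sum_right inner_commute Pr_orth)
  have "Pr p = - G" using assms by (simp add: L_def G_def eq_neg_iff_add_eq_0)
  then have "Pr p \<bullet> Pr p = 0" using PG by simp
  then have P0: "Pr p = 0" by simp
  then have G0: "G = 0" using \<open>Pr p = - G\<close> by simp
  have "p \<bullet> G = (\<Sum>i\<in>UNIV. 2 * (g i \<bullet> p)^2)"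
    by (simp add: G_def inner_sum_right inner_commute power2_eq_square mult.assoc)
  then have "(\<Sum>i\<in>UNIV. 2 * (g i \<bullet> p)^2) = 0" using G0 by simp
  then have "\<forall>i\<in>UNIV. 2 * (g i \<bullet> p)^2 = 0"
    by (subst sum_nonneg_eq_0_iff[symmetric]) auto
  then have "\<And>i. g i \<bullet> p = 0" by simp
  then have "Pr p = p" by (rule Pr_id)
  then show ?thesis using P0 by simp
qed

lemma DPhi_x_inj: assumes "DPhi (cv x) h = 0" shows "h = 0"
proof -
  have "DPhi (cv x) h = cv (L (rv h)) + \<i> *s cv (L (iv h))"
    by (subst decomp[of h]) (simp add: DPhi_add DPhi_smult DPhi_cv)
  then have "L (rv h) = rv (DPhi (cv x) h)" "L (iv h) = iv (DPhi (cv x) h)"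
    by (simp_all add: rv_comb iv_comb)
  then have "L (rv h) = 0" "L (iv h) = 0" using assms
    by (simp_all add: rv_def iv_def vec_eq_iff)
  then have "rv h = 0" "iv h = 0" by (auto intro: L_inj)
  then show ?thesis by (subst decomp) simp
qed

definition W0 :: "(real^'n) set" where "W0 = {h. \<forall>i. g i \<bullet> h = 0}"

lemma Pr_W0: "Pr h \<in> W0" by (simp add: W0_def Pr_orth)
lemma subspace_W0: "subspace W0"
  by (simp add: subspace_def W0_def inner_add_right)
lemma Phi_eq: "Phi y = rv (PhiC (cv y))" by (simp add: PhiC_cv)
lemma cont_Phi: "continuous_on S Phi"
proof -
  have "continuous_on S (rv \<circ> PhiC \<circ> cv)"
    by (intro continuous_on_compose continuous_on_cv continuous_on_rv
        has_derivative_continuous_on[OF has_derivative_PhiC[THEN has_derivative_at_withinI]])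
  then show ?thesis by (simp add: o_def Phi_eq[abs_def])
qed
lemma Phi_V: "y \<in> variety A a \<alpha> \<Longrightarrow> Phi y = Pr y"
  by (simp add: Phi_def variety_def)

lemma Phi_x: "Phi x = Pr x"
  using xV by (simp add: Phi_def variety_def)

lemma cont_DPhi_apply: "continuous_on S (\<lambda>z. DPhi z h)"
proof -
  have c1: "continuous_on S (\<lambda>z. cdot e z)" for e
    by (rule linear_continuous_on[OF bl_cdot])
  have c2: "continuous_on S (\<lambda>z. z $ k)" for k :: 'n
    by (rule linear_continuous_on[OF bounded_linear_vec_nth])
  have c3: "continuous_on S (\<lambda>z. dqc (A i) (a i) z h)" for i
    unfolding dqc_def cmv_nth
    by (intro continuous_intros c1 c2)
  have c4: "continuous_on UNIV (\<lambda>t::complex. t *s v)" for v :: "complex^'n"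
    by (rule linear_continuous_on[OF bl_smult_const])
  show ?thesis unfolding DPhi_def
    by (intro continuous_intros continuous_on_compose2[OF c4 c3, simplified])
qed

lemma local_inverse:
  obtains \<rho> \<delta> Psic Psi' where "\<rho> > 0" "\<delta> > 0"
    "inj_on PhiC (ball (cv x) \<rho>)"
    "\<And>w. w \<in> ball (cv (Pr x)) \<delta> \<Longrightarrow> Psic w \<in> ball (cv x) \<rho> \<and> PhiC (Psic w) = w"
    "\<And>z. z \<in> ball (cv x) \<rho> \<Longrightarrow> PhiC z \<in> ball (cv (Pr x)) \<delta> \<Longrightarrow> Psic (PhiC z) = z"
    "continuous_on (ball (cv (Pr x)) \<delta>) Psic"
    "\<And>w. w \<in> ball (cv (Pr x)) \<delta> \<Longrightarrow> (Psic has_derivative Psi' w) (at w)"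
    "\<And>w h. w \<in> ball (cv (Pr x)) \<delta> \<Longrightarrow> DPhi (Psic w) (Psi' w h) = h"
    "\<And>w h. w \<in> ball (cv (Pr x)) \<delta> \<Longrightarrow> Psi' w (DPhi (Psic w) h) = h"
proof -
  define f' where "f' z = Blinfun (DPhi z)" for z
  have f'a: "blinfun_apply (f' z) = DPhi z" for z
    by (simp add: f'_def bounded_linear_Blinfun_apply bl_DPhi)
  have derf: "(PhiC has_derivative blinfun_apply (f' z)) (at z)" for z
    by (simp add: f'a has_derivative_PhiC)
  have contf: "continuous_on UNIV f'"
    by (rule continuous_on_blinfun_componentwise) (simp add: f'a cont_DPhi_apply)
  define D0 where "D0 = DPhi (cv x)"
  have injD0: "inj D0"
    unfolding D0_def
    by (rule linear_inj_on_iff_eq_0[THEN iffD2, of _ UNIV, simplified])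
       (auto intro: bounded_linear.linear bl_DPhi DPhi_x_inj)
  have blinv: "bounded_linear (inv D0)"
    by (rule inj_linear_imp_inv_bounded_linear[OF _ injD0]) (simp add: D0_def bl_DPhi)
  define invf where "invf = Blinfun (inv D0)"
  have invf: "invf o\<^sub>L f' (cv x) = id_blinfun"
    by (rule blinfun_eqI) (simp add: invf_def f'a bounded_linear_Blinfun_apply blinv inv_f_f[OF injD0] flip: D0_def)
  obtain U' V' Psic Psi' where "open U'" "cv x \<in> U'" "open V'" "PhiC (cv x) \<in> V'"
      and hom: "homeomorphism U' V' PhiC Psic"
      and derg: "\<And>y. y \<in> V' \<Longrightarrow> (Psic has_derivative (Psi' y)) (at y)"
      and g': "\<And>y. y \<in> V' \<Longrightarrow> Psi' y = inv (blinfun_apply (f'(Psic y)))"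
      and bij: "\<And>y. y \<in> V' \<Longrightarrow> bij (blinfun_apply (f'(Psic y)))"
    by (rule inverse_function_theorem[OF open_UNIV derf contf UNIV_I invf]) blast
  obtain \<rho> where "\<rho> > 0" and \<rho>: "ball (cv x) \<rho> \<subseteq> U'"
    using \<open>open U'\<close> \<open>cv x \<in> U'\<close> open_contains_ball by blast
  have "openin (top_of_set V') (PhiC ` ball (cv x) \<rho>)"
    by (rule homeomorphism_imp_open_map[OF hom]) (use \<rho> \<open>open U'\<close> in \<open>simp add: openin_open_eq\<close>)
  then have opO: "open (PhiC ` ball (cv x) \<rho>)"
    using \<open>open V'\<close> openin_open_trans by blast
  have cx: "PhiC (cv x) = cv (Pr x)" by (simp add: PhiC_cv Phi_x)
  have "cv (Pr x) \<in> PhiC ` ball (cv x) \<rho>" using \<open>\<rho> > 0\<close> cx by (metis centre_in_ball imageI)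
  then obtain \<delta> where "\<delta> > 0" and \<delta>: "ball (cv (Pr x)) \<delta> \<subseteq> PhiC ` ball (cv x) \<rho>"
    using opO open_contains_ball by blast
  have OV: "PhiC ` ball (cv x) \<rho> \<subseteq> V'"
    using hom \<rho> by (auto simp: homeomorphism_def)
  show thesis
  proof (rule that[of \<rho> \<delta> Psic Psi'])
    show "inj_on PhiC (ball (cv x) \<rho>)"
      using hom \<rho> by (metis homeomorphism_apply1 inj_on_inverseI subsetD)
    show "Psic w \<in> ball (cv x) \<rho> \<and> PhiC (Psic w) = w" if wb: "w \<in> ball (cv (Pr x)) \<delta>" for w
    proof -
      obtain z where z: "z \<in> ball (cv x) \<rho>" "w = PhiC z" using wb \<delta> by blast
      have "Psic w = z" using z \<rho> hom by (metis homeomorphism_apply1 subsetD)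
      moreover have "PhiC (Psic w) = w" using wb \<delta> OV hom by (meson homeomorphism_apply2 subsetD)
      ultimately show ?thesis using z by simp
    qed
    show "Psic (PhiC z) = z" if "z \<in> ball (cv x) \<rho>" for z
      using that \<rho> hom by (metis homeomorphism_apply1 subsetD)
    show "continuous_on (ball (cv (Pr x)) \<delta>) Psic"
      using hom \<delta> OV by (meson continuous_on_subset homeomorphism_cont2 order_trans)
    show "(Psic has_derivative Psi' w) (at w)" if "w \<in> ball (cv (Pr x)) \<delta>" for w
      using that \<delta> OV derg by blast
    show "DPhi (Psic w) (Psi' w h) = h" if "w \<in> ball (cv (Pr x)) \<delta>" for w h
    proof -
      have wV: "w \<in> V'" using that \<delta> OV by blast
      show ?thesis using g'[OF wV] bij[OF wV] by (simp add: f'a bij_is_surj surj_f_inv_f)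
    qed
    show "Psi' w (DPhi (Psic w) h) = h" if "w \<in> ball (cv (Pr x)) \<delta>" for w h
    proof -
      have wV: "w \<in> V'" using that \<delta> OV by blast
      show ?thesis using g'[OF wV] bij[OF wV] by (simp add: f'a bij_is_inj inv_f_f)
    qed
    show "\<rho> > 0" by fact
    show "\<delta> > 0" by fact
  qed
qed

end



lemma msum_mv: "(\<Sum>i\<in>S. c i *\<^sub>R (M i :: real^'n^'k)) *v v = (\<Sum>i\<in>S. c i *\<^sub>R (M i *v v))"
  apply (simp add: vec_eq_iff matrix_vector_mult_def sum_component sum_distrib_left sum_distrib_right mult.assoc)
  apply (rule allI, rule sum.swap)
  done

lemma transpose_msum: "transpose (\<Sum>i\<in>S. c i *\<^sub>R (M i :: real^'n^'n)) = (\<Sum>i\<in>S. c i *\<^sub>R transpose (M i))"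
  by (simp add: vec_eq_iff transpose_def sum_component)

lemma transpose_diff': "transpose (X - Y :: real^'n^'n) = transpose X - transpose Y"
  by (simp add: vec_eq_iff transpose_def)

lemma posdef_small:
  fixes A :: "'m::finite \<Rightarrow> real^'n^'n"
  assumes sym: "\<And>i. transpose (A i) = A i"
  obtains \<eta> where "\<eta> > 0" "\<And>lam. (\<And>i. \<bar>lam i\<bar> < \<eta>) \<Longrightarrow> pos_def (mat 1 - (\<Sum>i\<in>UNIV. lam i *\<^sub>R A i))"
proof -
  have "\<exists>K. \<forall>v. norm (A i *v v) \<le> norm v * K" for i
    using bounded_linear.bounded[OF matrix_vector_mul_bounded_linear[of "A i"]] by blast
  then obtain K where K: "\<And>i v. norm (A i *v v) \<le> norm v * K i" by metis
  define C where "C = (\<Sum>i\<in>UNIV. \<bar>K i\<bar>) + 1"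
  have C: "C > 0" by (simp add: C_def add_nonneg_pos sum_nonneg)
  define \<eta> where "\<eta> = 1 / C"
  show thesis
  proof (rule that[of \<eta>])
    show "\<eta> > 0" using C by (simp add: \<eta>_def)
    fix lam :: "'m \<Rightarrow> real" assume lam: "\<And>i. \<bar>lam i\<bar> < \<eta>"
    show "pos_def (mat 1 - (\<Sum>i\<in>UNIV. lam i *\<^sub>R A i))"
      unfolding pos_def_def
    proof (intro conjI allI impI)
      show "transpose (mat 1 - (\<Sum>i\<in>UNIV. lam i *\<^sub>R A i)) = mat 1 - (\<Sum>i\<in>UNIV. lam i *\<^sub>R A i)"
        by (simp add: transpose_diff' transpose_msum transpose_mat sym)
      fix v :: "real^'n" assume "v \<noteq> 0"
      have "\<bar>v \<bullet> (lam i *\<^sub>R (A i *v v))\<bar> \<le> \<eta> * \<bar>K i\<bar> * (norm v)^2" for i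
      proof -
        have "\<bar>v \<bullet> (lam i *\<^sub>R (A i *v v))\<bar> = \<bar>lam i\<bar> * \<bar>v \<bullet> (A i *v v)\<bar>" by (simp add: abs_mult)
        also have "\<dots> \<le> \<bar>lam i\<bar> * (norm v * norm (A i *v v))"
          by (intro mult_left_mono Cauchy_Schwarz_ineq2) simp
        also have "\<dots> \<le> \<eta> * (norm v * (norm v * \<bar>K i\<bar>))"
        proof -
          have "norm (A i *v v) \<le> norm v * \<bar>K i\<bar>"
            using K[of i v] by (meson abs_ge_self mult_left_mono norm_ge_zero order_trans)
          then show ?thesis using lam[of i]
            by (intro mult_mono mult_left_mono) auto
        qed
        finally show ?thesis by (simp add: power2_eq_square mult_ac)
      qed
      then have "\<bar>\<Sum>i\<in>UNIV. v \<bullet> (lam i *\<^sub>R (A i *v v))\<bar> \<le> (\<Sum>i\<in>UNIV. \<eta> * \<bar>K i\<bar> * (norm v)^2)"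
        by (intro order_trans[OF sum_abs] sum_mono)
      also have "\<dots> = \<eta> * (C - 1) * (norm v)^2"
        by (simp add: C_def sum_distrib_left sum_distrib_right mult_ac)
      also have "\<dots> < (norm v)^2"
      proof -
        have "\<eta> * (C - 1) < 1" using C by (simp add: \<eta>_def field_simps)
        then show ?thesis using \<open>v \<noteq> 0\<close> by simp
      qed
      finally have "\<bar>\<Sum>i\<in>UNIV. v \<bullet> (lam i *\<^sub>R (A i *v v))\<bar> < (norm v)^2" .
      moreover have "v \<bullet> ((mat 1 - (\<Sum>i\<in>UNIV. lam i *\<^sub>R A i)) *v v) = (norm v)^2 - (\<Sum>i\<in>UNIV. v \<bullet> (lam i *\<^sub>R (A i *v v)))"
        by (simp add: matrix_vector_mult_diff_rdistrib matrix_vector_mul_lid msum_mv inner_diff_right inner_sum_right power2_norm_eq_inner)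
      ultimately show "v \<bullet> ((mat 1 - (\<Sum>i\<in>UNIV. lam i *\<^sub>R A i)) *v v) > 0" by linarith
    qed
  qed
qed

lemma norm_cv_diff: "norm (cv u - cv w) = norm (u - w)"
  by (metis cv_diff norm_cv)
lemma dist_cv: "dist (cv u) (cv w) = dist u w"
  by (simp add: dist_norm norm_cv_diff)

locale quadinv = quadsys A a \<alpha> x g B0
  for A :: "'m::finite \<Rightarrow> real^'n^'n" and a \<alpha> x g B0 +
  fixes \<rho> \<delta> :: real and Psic :: "complex^'n \<Rightarrow> complex^'n" and Psi' :: "complex^'n \<Rightarrow> complex^'n \<Rightarrow> complex^'n"
  assumes rho: "\<rho> > 0" and delta: "\<delta> > 0"
    and injP: "inj_on PhiC (ball (cv x) \<rho>)"
    and PsiP: "\<And>w. w \<in> ball (cv (Pr x)) \<delta> \<Longrightarrow> Psic w \<in> ball (cv x) \<rho> \<and> PhiC (Psic w) = w"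
    and PPsi: "\<And>z. z \<in> ball (cv x) \<rho> \<Longrightarrow> PhiC z \<in> ball (cv (Pr x)) \<delta> \<Longrightarrow> Psic (PhiC z) = z"
    and contPsic: "continuous_on (ball (cv (Pr x)) \<delta>) Psic"
    and derPsic: "\<And>w. w \<in> ball (cv (Pr x)) \<delta> \<Longrightarrow> (Psic has_derivative Psi' w) (at w)"
    and rinv: "\<And>w h. w \<in> ball (cv (Pr x)) \<delta> \<Longrightarrow> DPhi (Psic w) (Psi' w h) = h"
    and linv: "\<And>w h. w \<in> ball (cv (Pr x)) \<delta> \<Longrightarrow> Psi' w (DPhi (Psic w) h) = h"
begin

definition Psi :: "real^'n \<Rightarrow> real^'n" where "Psi w = rv (Psic (cv w))"

lemma real_Psic:
  assumes w: "w \<in> ball (Pr x) \<delta>" shows "Psic (cv w) = cv (Psi w)"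
proof -
  have cw: "cv w \<in> ball (cv (Pr x)) \<delta>" using w by (simp add: dist_cv)
  define z where "z = Psic (cv w)"
  have z: "z \<in> ball (cv x) \<rho>" "PhiC z = cv w" using PsiP[OF cw] by (auto simp: z_def)
  have "cj z \<in> ball (cv x) \<rho>"
    using z(1) by (simp add: dist_norm) (metis cj_cv cj_diff norm_cj)
  moreover have "PhiC (cj z) = PhiC z" by (simp add: PhiC_cj z(2))
  ultimately have "cj z = z" using injP z(1) by (meson inj_onD)
  then show ?thesis unfolding Psi_def z_def[symmetric] by (rule cj_fixed)
qed

lemma Psi_in:
  assumes w: "w \<in> ball (Pr x) \<delta>" shows "Psi w \<in> ball x \<rho>" "Phi (Psi w) = w"
proof -
  have cw: "cv w \<in> ball (cv (Pr x)) \<delta>" using w by (simp add: dist_cv)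
  show "Psi w \<in> ball x \<rho>" using PsiP[OF cw] real_Psic[OF w] by (simp add: dist_cv)
  have "cv (Phi (Psi w)) = cv w" using PsiP[OF cw] real_Psic[OF w] by (simp flip: PhiC_cv)
  then show "Phi (Psi w) = w" by (simp add: cv_inj)
qed

lemma Psi_Phi:
  assumes "y \<in> ball x \<rho>" "Phi y \<in> ball (Pr x) \<delta>" shows "Psi (Phi y) = y"
proof -
  have "Psic (PhiC (cv y)) = cv y" using assms by (intro PPsi) (simp_all add: dist_cv PhiC_cv)
  then show ?thesis by (simp add: Psi_def PhiC_cv)
qed

lemma Psi_w0: "Psi (Pr x) = x"
  using Psi_Phi[of x] rho delta by (simp add: Phi_x)

lemma cont_Psi: "continuous_on (ball (Pr x) \<delta>) Psi"
proof -
  have "continuous_on (ball (Pr x) \<delta>) (rv \<circ> Psic \<circ> cv)"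
    by (intro continuous_on_compose continuous_on_cv continuous_on_subset[OF contPsic])
       (auto simp: dist_cv continuous_on_rv)
  then show ?thesis by (simp add: Psi_def[abs_def] o_def)
qed

lemma Psi'_smult:
  assumes "w \<in> ball (cv (Pr x)) \<delta>" shows "Psi' w (c *s u) = c *s Psi' w u"
proof -
  have "Psi' w (c *s u) = Psi' w (c *s DPhi (Psic w) (Psi' w u))" by (simp add: rinv[OF assms])
  also have "\<dots> = Psi' w (DPhi (Psic w) (c *s Psi' w u))" by (simp add: DPhi_smult)
  also have "\<dots> = c *s Psi' w u" by (simp add: linv[OF assms])
  finally show ?thesis .
qed

lemma holo_line:
  assumes D: "\<And>t. t \<in> D \<Longrightarrow> c + t *s v \<in> ball (cv (Pr x)) \<delta>"
  shows "(\<lambda>t. qc (A i) (a i) (\<alpha> i) (Psic (c + t *s v))) holomorphic_on D"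
  unfolding holomorphic_on_def field_differentiable_def
proof
  fix t assume t: "t \<in> D"
  define w where "w = c + t *s v"
  have wb: "w \<in> ball (cv (Pr x)) \<delta>" using D[OF t] by (simp add: w_def)
  have l: "((\<lambda>t. c + t *s v) has_derivative (\<lambda>s. s *s v)) (at t)"
    using has_derivative_add[OF has_derivative_const bounded_linear_imp_has_derivative[OF bl_smult_const]]
    by simp
  have "((\<lambda>t. qc (A i) (a i) (\<alpha> i) (Psic (c + t *s v))) has_derivative
      (\<lambda>s. dqc (A i) (a i) (Psic w) (Psi' w (s *s v)))) (at t)"
    using has_derivative_compose[OF has_derivative_compose[OF l derPsic[OF wb, unfolded w_def]] has_derivative_qc]
    by (simp add: w_def)
  moreover have "(\<lambda>s. dqc (A i) (a i) (Psic w) (Psi' w (s *s v))) = (*) (dqc (A i) (a i) (Psic w) (Psi' w v))"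
    by (rule ext) (simp add: Psi'_smult[OF wb] dqc_smult mult.commute)
  ultimately have "((\<lambda>t. qc (A i) (a i) (\<alpha> i) (Psic (c + t *s v))) has_field_derivative
      (dqc (A i) (a i) (Psic w) (Psi' w v))) (at t)"
    by (simp add: has_field_derivative_def)
  then show "\<exists>f'. ((\<lambda>t. qc (A i) (a i) (\<alpha> i) (Psic (c + t *s v))) has_field_derivative f') (at t within D)"
    by (blast intro: has_field_derivative_at_within)
qed

lemma extend:
  assumes w1: "w1 \<in> W0" and eps: "\<epsilon> > 0" and sub: "ball w1 \<epsilon> \<subseteq> ball (Pr x) \<delta>"
    and V1: "\<And>w. w \<in> W0 \<Longrightarrow> w \<in> ball w1 \<epsilon> \<Longrightarrow> Psi w \<in> variety A a \<alpha>"
    and w: "w \<in> W0" "w \<in> ball (Pr x) \<delta>"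
  shows "Psi w \<in> variety A a \<alpha>"
proof -
  define v where "v = w - w1"
  have "quad (A i) (a i) (\<alpha> i) (Psi w) = 0" for i
  proof -
    define D where "D = {t::complex. cv w1 + t *s cv v \<in> ball (cv (Pr x)) \<delta>}"
    define \<phi> where "\<phi> t = qc (A i) (a i) (\<alpha> i) (Psic (cv w1 + t *s cv v))" for t
    have hol: "\<phi> holomorphic_on D" unfolding \<phi>_def by (rule holo_line) (simp add: D_def)
    have D': "D = (\<lambda>t. t *s cv v) -` ball (cv (Pr x) - cv w1) \<delta>"
      by (auto simp: D_def dist_norm algebra_simps)
    have opD: "open D" unfolding D'
      by (intro continuous_open_vimage open_ball linear_continuous_at bl_smult_const)
    have cD: "connected D" unfolding D'
      by (intro convex_connected convex_linear_vimage convex_ball bounded_linear.linear[OF bl_smult_const])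
    have lr: "cv w1 + complex_of_real s *s cv v = cv (w1 + s *\<^sub>R v)" for s
      by (simp add: cv_add cv_scaleR)
    define c where "c = \<epsilon> / (norm v + 1)"
    have "norm v + 1 > 0" by (simp add: add_nonneg_pos)
    then have c: "c > 0" using eps by (simp add: c_def)
    define U where "U = complex_of_real ` {0<..<c}"
    have U: "t \<in> D \<and> \<phi> t = 0" if "t \<in> U" for t
    proof -
      obtain s where s: "t = complex_of_real s" "0 < s" "s < c" using \<open>t \<in> U\<close> by (auto simp: U_def)
      have "norm (s *\<^sub>R v) \<le> c * norm v" using s by (simp add: mult_right_mono)
      also have "\<dots> < \<epsilon>"
      proof -
        have "\<epsilon> * norm v < \<epsilon> * (norm v + 1)" using eps by simp
        then show ?thesis using \<open>norm v + 1 > 0\<close> by (simp add: c_def field_simps)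
      qed
      finally have "w1 + s *\<^sub>R v \<in> ball w1 \<epsilon>" by (simp add: dist_norm)
      moreover have "w1 + s *\<^sub>R v \<in> W0"
        using w1 w by (simp add: W0_def v_def inner_add_right inner_diff_right)
      ultimately have *: "Psi (w1 + s *\<^sub>R v) \<in> variety A a \<alpha>" "w1 + s *\<^sub>R v \<in> ball (Pr x) \<delta>"
        using V1 sub by auto
      have "t \<in> D" using *(2) by (simp add: D_def s(1) lr dist_cv)
      moreover have "\<phi> t = 0"
        using * by (simp add: \<phi>_def s(1) lr real_Psic qc_cv variety_def)
      ultimately show ?thesis ..
    qed
    have lim: "0 islimpt U"
      unfolding islimpt_approachable
    proof (intro allI impI)
      fix e :: real assume "e > 0"
      define s where "s = min c e / 2"
      have "s > 0" "s < c" "s < e" using c \<open>e > 0\<close> by (auto simp: s_def)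
      then show "\<exists>x'\<in>U. x' \<noteq> 0 \<and> dist x' 0 < e"
        by (intro bexI[of _ "complex_of_real s"]) (auto simp: U_def)
    qed
    have "w1 \<in> ball (Pr x) \<delta>" using sub eps centre_in_ball by blast
    then have "0 \<in> D" by (simp add: D_def dist_cv)
    have "1 \<in> D" using w by (simp add: D_def v_def flip: cv_add) (simp add: dist_cv)
    have "\<phi> 1 = 0"
      by (rule analytic_continuation[OF hol opD cD _ \<open>0 \<in> D\<close> lim _ \<open>1 \<in> D\<close>]) (use U in auto)
    then show ?thesis
      using w by (simp add: \<phi>_def v_def flip: cv_add) (simp add: real_Psic qc_cv)
  qed
  then show ?thesis by (simp add: variety_def)
qed

lemma Phi_inj: "inj_on Phi (ball x \<rho>)"
proof (rule inj_onI)
  fix y z assume "y \<in> ball x \<rho>" "z \<in> ball x \<rho>" "Phi y = Phi z"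
  then have "PhiC (cv y) = PhiC (cv z)" "cv y \<in> ball (cv x) \<rho>" "cv z \<in> ball (cv x) \<rho>"
    by (simp_all add: PhiC_cv dist_cv)
  then show "y = z" using injP by (meson inj_onD cv_inj)
qed

lemma all_V:
  assumes dimW0: "dim W0 \<le> d"
    and H: "\<forall>e>0. \<exists>S \<subseteq> variety A a \<alpha> \<inter> ball x e. \<exists>(W::(real^'n) set) T.
      subspace W \<and> dim W = d \<and> openin (top_of_set W) T \<and> T \<noteq> {} \<and> T homeomorphic S"
    and w: "w \<in> W0" "w \<in> ball (Pr x) \<delta>"
  shows "Psi w \<in> variety A a \<alpha>"
proof -
  have "isCont Phi x" using cont_Phi[of UNIV] by (simp add: continuous_on_eq_continuous_at)
  then obtain e1 where "e1 > 0" and e1: "\<And>y. dist y x < e1 \<Longrightarrow> dist (Phi y) (Phi x) < \<delta>/2"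
    using delta unfolding continuous_at_eps_delta by (metis half_gt_zero)
  define e where "e = min e1 \<rho>"
  have "e > 0" using \<open>e1 > 0\<close> rho by (simp add: e_def)
  have "\<exists>S \<subseteq> variety A a \<alpha> \<inter> ball x e. \<exists>(W::(real^'n) set) T.
      subspace W \<and> dim W = d \<and> openin (top_of_set W) T \<and> T \<noteq> {} \<and> T homeomorphic S"
    using H \<open>e > 0\<close> by simp
  then obtain S where S: "S \<subseteq> variety A a \<alpha> \<inter> ball x e" and
     "\<exists>(W::(real^'n) set) T. subspace W \<and> dim W = d \<and> openin (top_of_set W) T \<and> T \<noteq> {} \<and> T homeomorphic S"
    by blast
  then obtain W T where W: "subspace W" "dim W = d" "W \<subseteq> (UNIV::(real^'n) set)"
      and T: "openin (top_of_set W) T" "T \<noteq> {}" and hT: "T homeomorphic S"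
    by blast
  obtain h k where hk: "homeomorphism T S h k" using hT homeomorphic_def by blast
  have Sb: "s \<in> ball x \<rho>" "Phi s \<in> ball (Pr x) (\<delta>/2)" if "s \<in> S" for s
  proof -
    have "dist s x < e" using that S by (auto simp: dist_commute)
    then show "s \<in> ball x \<rho>" "Phi s \<in> ball (Pr x) (\<delta>/2)"
      using e1[of s] by (auto simp: e_def dist_commute Phi_x)
  qed
  have op: "openin (top_of_set W0) ((Phi \<circ> h) ` T)"
  proof (rule invariance_of_domain_subspaces[OF T(1) W(1) subspace_W0])
    show "dim W0 \<le> dim W" using dimW0 W by simp
    show "continuous_on T (Phi \<circ> h)"
      using hk by (intro continuous_on_compose cont_Phi) (auto simp: homeomorphism_def)
    show "Phi \<circ> h \<in> T \<rightarrow> W0"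
      using hk S by (auto simp: homeomorphism_def Phi_V Pr_W0)
    show "inj_on (Phi \<circ> h) T"
    proof (rule comp_inj_on)
      show "inj_on h T" using hk by (metis homeomorphism_apply1 inj_on_inverseI)
      show "inj_on Phi (h ` T)" using hk Sb by (auto simp: homeomorphism_def intro: inj_on_subset[OF Phi_inj])
    qed
  qed
  have img: "(Phi \<circ> h) ` T = Phi ` S" using hk by (metis homeomorphism_image1 image_comp)
  obtain s1 where "s1 \<in> S" using T(2) hk by (auto simp: homeomorphism_def)
  define w1 where "w1 = Phi s1"
  have w1O: "w1 \<in> Phi ` S" using \<open>s1 \<in> S\<close> by (simp add: w1_def)
  then obtain \<epsilon> where "\<epsilon> > 0" and \<epsilon>: "\<And>w'. w' \<in> W0 \<Longrightarrow> dist w' w1 < \<epsilon> \<Longrightarrow> w' \<in> Phi ` S"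
  proof -
    have "openin (top_of_set W0) (Phi ` S)" using op img by simp
    then show ?thesis using w1O that unfolding openin_euclidean_subtopology_iff by meson
  qed
  have w1W: "w1 \<in> W0" using op img w1O by (metis openin_imp_subset subsetD)
  have w1b: "dist (Pr x) w1 < \<delta>/2" using Sb(2)[OF \<open>s1 \<in> S\<close>] by (simp add: w1_def)
  define \<epsilon>' where "\<epsilon>' = min \<epsilon> (\<delta>/2)"
  show ?thesis
  proof (rule extend[OF w1W _ _ _ w])
    show "\<epsilon>' > 0" using \<open>\<epsilon> > 0\<close> delta by (simp add: \<epsilon>'_def)
    show "ball w1 \<epsilon>' \<subseteq> ball (Pr x) \<delta>"
    proof
      fix y assume "y \<in> ball w1 \<epsilon>'"
      then have "dist w1 y < \<delta>/2" by (simp add: \<epsilon>'_def)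
      then show "y \<in> ball (Pr x) \<delta>" using w1b dist_triangle[of "Pr x" y w1] by simp
    qed
    show "Psi w' \<in> variety A a \<alpha>" if ww1: "w' \<in> W0" and ww2: "w' \<in> ball w1 \<epsilon>'" for w'
    proof -
      obtain s where s: "s \<in> S" "w' = Phi s" using \<epsilon>[OF ww1] ww2 by (auto simp: \<epsilon>'_def dist_commute)
      have "Phi s \<in> ball (Pr x) \<delta>" using Sb(2)[OF s(1)] delta by auto
      then have "Psi w' = s" using Sb(1)[OF s(1)] s(2) by (simp add: Psi_Phi)
      then show ?thesis using s S by auto
    qed
  qed
qed


lemma K_inj: assumes "Pr p - (\<Sum>i\<in>UNIV. (g i \<bullet> p) *\<^sub>R g i) = 0" shows "p = 0"
proof -
  define G where "G = (\<Sum>i\<in>UNIV. (g i \<bullet> p) *\<^sub>R g i)"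
  have PG: "Pr p \<bullet> G = 0"
    by (simp add: G_def inner_sum_right inner_commute Pr_orth)
  have "Pr p = G" using assms by (simp add: G_def)
  then have "Pr p \<bullet> Pr p = 0" using PG by simp
  then have P0: "Pr p = 0" by simp
  then have G0: "G = 0" using \<open>Pr p = G\<close> by simp
  have "p \<bullet> G = (\<Sum>i\<in>UNIV. (g i \<bullet> p)^2)"
    by (simp add: G_def inner_sum_right inner_commute power2_eq_square)
  then have "(\<Sum>i\<in>UNIV. (g i \<bullet> p)^2) = 0" using G0 by simp
  then have "\<forall>i\<in>UNIV. (g i \<bullet> p)^2 = 0"
    by (subst sum_nonneg_eq_0_iff[symmetric]) auto
  then have "\<And>i. g i \<bullet> p = 0" by simp
  then have "Pr p = p" by (rule Pr_id)
  then show ?thesis using P0 by simp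
qed

lemma L_W0: "h \<in> W0 \<Longrightarrow> L h = h"
  by (simp add: L_def W0_def Pr_id)

lemma nbhd:
  assumes allV: "\<And>w. w \<in> W0 \<Longrightarrow> w \<in> ball (Pr x) \<delta> \<Longrightarrow> Psi w \<in> variety A a \<alpha>"
  shows "\<exists>U. open U \<and> x \<in> U \<and> U \<subseteq> ed_region A a \<alpha>"
proof -
  define w0 where "w0 = cv (Pr x)"
  have w0b: "w0 \<in> ball (cv (Pr x)) \<delta>" using delta by (simp add: w0_def)
  define DP where "DP h = rv (Psi' w0 (cv h))" for h
  have Psic0: "Psic w0 = cv x"
    using real_Psic[of "Pr x"] delta by (simp add: w0_def Psi_w0)
  have DP_W0: "DP h = h" if "h \<in> W0" for h
  proof -
    have "Psi' w0 (DPhi (Psic w0) (cv h)) = cv h" by (rule linv[OF w0b])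
    then have "Psi' w0 (cv h) = cv h" by (simp add: Psic0 DPhi_cv L_W0[OF that])
    then show ?thesis by (simp add: DP_def)
  qed
  have dPsi: "(Psi has_derivative DP) (at (Pr x))"
  proof -
    have "((\<lambda>w. rv (Psic (cv w))) has_derivative (\<lambda>h. rv (Psi' w0 (cv h)))) (at (Pr x))"
      by (rule has_derivative_compose[OF has_derivative_compose[OF bounded_linear_imp_has_derivative[OF bl_cv]]
            bounded_linear_imp_has_derivative[OF bl_rv]])
         (use derPsic[OF w0b] in \<open>simp add: w0_def\<close>)
    then show ?thesis by (simp add: Psi_def[abs_def] DP_def[abs_def])
  qed
  define Th where "Th p = Psi (Pr p) - (\<Sum>i\<in>UNIV. (g i \<bullet> (p - x)) *\<^sub>R (A i *v Psi (Pr p) + a i))" for p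
  define K where "K h = Pr h - (\<Sum>i\<in>UNIV. (g i \<bullet> h) *\<^sub>R g i)" for h
  have d1: "((\<lambda>p. Psi (Pr p)) has_derivative (\<lambda>h. DP (Pr h))) (at x)"
    by (rule has_derivative_compose[OF bounded_linear_imp_has_derivative[OF bl_Pr] dPsi])
  have d2: "((\<lambda>p. g i \<bullet> (p - x)) has_derivative (\<lambda>h. g i \<bullet> h)) (at x)" for i
    by (intro has_derivative_inner_right) (auto intro!: derivative_eq_intros)
  have d3: "((\<lambda>p. A i *v Psi (Pr p) + a i) has_derivative (\<lambda>h. A i *v DP (Pr h) + 0)) (at x)" for i
    by (intro has_derivative_add has_derivative_const
          bounded_linear.has_derivative[OF matrix_vector_mul_bounded_linear d1])
  have dTh0: "(Th has_derivative (\<lambda>h. DP (Pr h) - (\<Sum>i\<in>UNIV. (g i \<bullet> (x - x)) *\<^sub>R (A i *v DP (Pr h) + 0)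
       + (g i \<bullet> h) *\<^sub>R (A i *v Psi (Pr x) + a i)))) (at x)"
    unfolding Th_def[abs_def]
    by (intro has_derivative_diff d1 has_derivative_sum has_derivative_scaleR d2 d3)
  have "(\<lambda>h. DP (Pr h) - (\<Sum>i\<in>UNIV. (g i \<bullet> (x - x)) *\<^sub>R (A i *v DP (Pr h) + 0)
       + (g i \<bullet> h) *\<^sub>R (A i *v Psi (Pr x) + a i))) = K"
    by (rule ext) (simp add: K_def DP_W0[OF Pr_W0] Psi_w0 g_def)
  with dTh0 have dTh: "(Th has_derivative K) (at x)" by simp
  have linK: "linear K" using dTh has_derivative_linear by blast
  have "inj K"
    using linK by (simp add: linear_inj_on_iff_eq_0[of K UNIV, simplified] K_def K_inj)
  then have "surj K" by (rule linear_inj_imp_surj[OF linK])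
  then obtain g' where g': "linear g'" "K \<circ> g' = id"
    using linear_surjective_right_inverse[OF linK \<open>surj K\<close>] by (elim exE conjE)
  obtain \<eta> where "\<eta> > 0" and eta: "\<And>lam. (\<And>i. \<bar>lam i\<bar> < \<eta>) \<Longrightarrow> pos_def (mat 1 - (\<Sum>i\<in>UNIV. lam i *\<^sub>R A i))"
    using posdef_small[of A, OF sym] by blast
  have "isCont Pr x" by (rule linear_continuous_at[OF bl_Pr])
  then obtain e1 where "e1 > 0" and e1: "\<And>p. dist p x < e1 \<Longrightarrow> dist (Pr p) (Pr x) < \<delta>"
    using delta unfolding continuous_at_eps_delta by metis
  define Gs where "Gs = (\<Sum>i\<in>UNIV. norm (g i)) + 1"
  have Gs: "Gs > 0" by (simp add: Gs_def add_nonneg_pos sum_nonneg)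
  define e0 where "e0 = min e1 (\<eta> / Gs)"
  have "e0 > 0" using \<open>e1 > 0\<close> \<open>\<eta> > 0\<close> Gs by (simp add: e0_def)
  have S0: "Pr p \<in> ball (Pr x) \<delta>" "\<bar>g i \<bullet> (p - x)\<bar> < \<eta>" if "p \<in> ball x e0" for p i
  proof -
    show "Pr p \<in> ball (Pr x) \<delta>" using e1[of p] that by (simp add: e0_def dist_commute)
    have "norm (g i) \<le> (\<Sum>i\<in>UNIV. norm (g i))" by (rule member_le_sum) auto
    then have ng: "norm (g i) \<le> Gs" by (simp add: Gs_def)
    have "\<bar>g i \<bullet> (p - x)\<bar> \<le> norm (g i) * norm (p - x)" by (rule Cauchy_Schwarz_ineq2)
    also have "\<dots> \<le> Gs * norm (p - x)" using ng by (simp add: mult_right_mono)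
    also have "\<dots> < Gs * (\<eta> / Gs)"
    proof -
      have "norm (p - x) < \<eta> / Gs" using that by (simp add: e0_def dist_norm norm_minus_commute)
      then show ?thesis using Gs by (intro mult_strict_left_mono) auto
    qed
    also have "\<dots> = \<eta>" using Gs by simp
    finally show "\<bar>g i \<bullet> (p - x)\<bar> < \<eta>" .
  qed
  have contTh: "continuous_on (ball x e0) Th"
  proof -
    have c1: "continuous_on (ball x e0) (\<lambda>p. Psi (Pr p))"
      by (rule continuous_on_compose2[OF cont_Psi linear_continuous_on[OF bl_Pr]]) (use S0 in auto)
    have c2: "continuous_on (ball x e0) (\<lambda>p. A i *v Psi (Pr p))" for i
      by (rule continuous_on_compose2[OF linear_continuous_on[OF matrix_vector_mul_bounded_linear] c1]) auto
    show ?thesis unfolding Th_def[abs_def]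
      by (intro continuous_intros c1 c2)
  qed
  have "Th x \<in> interior (Th ` ball x e0)"
    by (rule sussmann_open_mapping[OF open_ball contTh _ dTh _ g'(2) subset_refl])
       (use \<open>e0 > 0\<close> g'(1) in \<open>auto simp: linear_conv_bounded_linear\<close>)
  moreover have "Th x = x" by (simp add: Th_def Psi_w0)
  moreover have "Th ` ball x e0 \<subseteq> ed_region A a \<alpha>"
  proof
    fix u assume "u \<in> Th ` ball x e0"
    then obtain p where p: "p \<in> ball x e0" "u = Th p" by blast
    define y where "y = Psi (Pr p)"
    define lam where "lam i = g i \<bullet> (p - x)" for i
    have yV: "y \<in> variety A a \<alpha>" using allV[OF Pr_W0 S0(1)[OF p(1)]] by (simp add: y_def)
    have pd: "pos_def (mat 1 - (\<Sum>i\<in>UNIV. lam i *\<^sub>R A i))"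
      by (rule eta) (simp add: lam_def S0(2)[OF p(1)])
    have "- u - (\<Sum>i\<in>UNIV. lam i *\<^sub>R a i) + (mat 1 - (\<Sum>i\<in>UNIV. lam i *\<^sub>R A i)) *v y = 0"
      by (simp add: p(2) Th_def lam_def[symmetric] y_def[symmetric] matrix_vector_mult_diff_rdistrib
          matrix_vector_mul_lid msum_mv scaleR_add_right sum.distrib)
    then show "u \<in> ed_region A a \<alpha>"
      unfolding ed_region_def using yV pd by blast
  qed
  ultimately show ?thesis
    by (intro exI[of _ "interior (Th ` ball x e0)"]) (auto intro: interior_subset[THEN subsetD])
qed

end


lemma hd_vec:
  fixes f :: "'a::real_normed_vector \<Rightarrow> real^'m"
  assumes "\<And>i. ((\<lambda>y. f y $ i) has_derivative (\<lambda>h. f' h $ i)) (at z)"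
  shows "(f has_derivative f') (at z)"
proof -
  have "\<forall>b\<in>Basis. ((\<lambda>y. f y \<bullet> b) has_derivative (\<lambda>h. f' h \<bullet> b)) (at z)"
  proof
    fix b :: "real^'m" assume "b \<in> Basis"
    then obtain i where b: "b = axis i 1" by (auto simp: Basis_vec_def)
    show "((\<lambda>y. f y \<bullet> b) has_derivative (\<lambda>h. f' h \<bullet> b)) (at z)"
      using assms[of i] by (simp add: b inner_axis)
  qed
  then show ?thesis using has_derivative_componentwise_within[of f f' z UNIV] by simp
qed

lemma quad_derivative:
  assumes sym: "transpose A = A"
  shows "(quad A a \<alpha> has_derivative (\<lambda>h. 2 * ((A *v x + a) \<bullet> h))) (at x)"
proof -
  have "((\<lambda>y. Re (qc A a \<alpha> (cv y))) has_derivative (\<lambda>h. Re (dqc A a (cv x) (cv h)))) (at x)"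
    by (rule has_derivative_compose[OF has_derivative_compose[OF bounded_linear_imp_has_derivative[OF bl_cv]
          has_derivative_qc] bounded_linear_imp_has_derivative[OF bounded_linear_Re]])
  then show ?thesis by (simp add: qc_cv dqc_cv[OF sym])
qed

theorem corollary4p2:
  fixes A :: "'m::finite \<Rightarrow> real^'n^'n" and a :: "'m \<Rightarrow> real^'n" and \<alpha> :: "'m \<Rightarrow> real"
    and x :: "real^'n"
  assumes sym: "\<And>i. transpose (A i) = A i"
    and xV: "x \<in> variety A a \<alpha>"
    and regular: "rank (Jac A a \<alpha> x) = local_codim (variety A a \<alpha>) x"
  shows "\<exists>U. open U \<and> x \<in> U \<and> U \<subseteq> ed_region A a \<alpha>"
proof -
  define g where "g i = A i *v x + a i" for i
  obtain B0 where B0: "B0 \<subseteq> span (range g)" "pairwise orthogonal B0" "\<And>x. x \<in> B0 \<Longrightarrow> norm x = 1"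
      "independent B0" "card B0 = dim (span (range g))" "span B0 = span (range g)"
    by (rule orthonormal_basis_subspace[OF subspace_span]) blast
  have "finite B0" using B0(4) independent_imp_finite by blast
  interpret Q: quadsys A a \<alpha> x g B0
    by unfold_locales (use sym xV B0 \<open>finite B0\<close> in \<open>auto simp: g_def\<close>)
  obtain \<rho> \<delta> Psic Psi' where "\<rho> > 0" "\<delta> > 0"
    "inj_on Q.PhiC (ball (cv x) \<rho>)"
    "\<And>w. w \<in> ball (cv (Q.Pr x)) \<delta> \<Longrightarrow> Psic w \<in> ball (cv x) \<rho> \<and> Q.PhiC (Psic w) = w"
    "\<And>z. z \<in> ball (cv x) \<rho> \<Longrightarrow> Q.PhiC z \<in> ball (cv (Q.Pr x)) \<delta> \<Longrightarrow> Psic (Q.PhiC z) = z"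
    "continuous_on (ball (cv (Q.Pr x)) \<delta>) Psic"
    "\<And>w. w \<in> ball (cv (Q.Pr x)) \<delta> \<Longrightarrow> (Psic has_derivative Psi' w) (at w)"
    "\<And>w h. w \<in> ball (cv (Q.Pr x)) \<delta> \<Longrightarrow> Q.DPhi (Psic w) (Psi' w h) = h"
    "\<And>w h. w \<in> ball (cv (Q.Pr x)) \<delta> \<Longrightarrow> Psi' w (Q.DPhi (Psic w) h) = h"
    by (rule Q.local_inverse) blast
  then interpret I: quadinv A a \<alpha> x g B0 \<rho> \<delta> Psic Psi'
    by unfold_locales auto
  define V where "V = variety A a \<alpha>"
  define P where "P d' \<longleftrightarrow> (\<forall>e>0. \<exists>S \<subseteq> V \<inter> ball x e. \<exists>(W::(real^'n) set) T.
      subspace W \<and> dim W = d' \<and> openin (top_of_set W) T \<and> T \<noteq> {} \<and> T homeomorphic S)" for d'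
  define d where "d = local_dim V x"
  have ld: "d = (GREATEST d. P d)" by (simp add: d_def local_dim_def P_def)
  have P0: "P 0" unfolding P_def
  proof (intro allI impI)
    fix e :: real assume "e > 0"
    have "{x} \<subseteq> V \<inter> ball x e" using xV \<open>e > 0\<close> by (simp add: V_def)
    moreover have "subspace ({0}::(real^'n) set)" by (rule subspace_single_0)
    moreover have "dim ({0}::(real^'n) set) = 0" by simp
    moreover have "openin (top_of_set ({0}::(real^'n) set)) {0}" by simp
    moreover have "({0}::(real^'n) set) homeomorphic {x}" by (simp add: homeomorphic_finite)
    ultimately show "\<exists>S \<subseteq> V \<inter> ball x e. \<exists>(W::(real^'n) set) T.
      subspace W \<and> dim W = 0 \<and> openin (top_of_set W) T \<and> T \<noteq> {} \<and> T homeomorphic S"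
      by blast
  qed
  have bnd: "d' \<le> CARD('n)" if Pd': "P d'" for d'
  proof -
    obtain S where "S \<subseteq> V \<inter> ball x 1" "\<exists>(W::(real^'n) set) T.
      subspace W \<and> dim W = d' \<and> openin (top_of_set W) T \<and> T \<noteq> {} \<and> T homeomorphic S"
      using Pd' unfolding P_def by (meson zero_less_one)
    then obtain W :: "(real^'n) set" where "dim W = d'" by blast
    then show ?thesis using dim_subset_UNIV[of W] by simp
  qed
  have Pd: "P d" unfolding ld by (rule GreatestI_nat[of P 0 "CARD('n)", OF P0 bnd])
  have dle: "d \<le> CARD('n)" using bnd[OF Pd] .
  define D where "D h = (\<chi> i. 2 * (g i \<bullet> h))" for h
  have fd: "(fsys A a \<alpha> has_derivative D) (at x)"
    unfolding fsys_def[abs_def] D_def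
    by (rule hd_vec) (simp add: g_def quad_derivative[OF sym])
  have jac: "jacobian (fsys A a \<alpha>) (at x) = matrix D"
    by (simp add: jacobian_def frechet_derivative_at[OF fd, symmetric])
  have rowsD: "rows (matrix D) = range (\<lambda>i. 2 *\<^sub>R g i)"
    by (auto simp: rows_def row_def matrix_def D_def vec_eq_iff inner_axis mult.commute)
  have spans: "span (range (\<lambda>i. 2 *\<^sub>R g i)) = span (range g)"
  proof (subst span_eq, intro conjI)
    show "range (\<lambda>i. 2 *\<^sub>R g i) \<subseteq> span (range g)"
      by (auto intro: span_mul span_base)
    have "g i = (1/2) *\<^sub>R (2 *\<^sub>R g i)" for i by simp
    then show "range g \<subseteq> span (range (\<lambda>i. 2 *\<^sub>R g i))"
      by (metis (no_types, lifting) image_subset_iff rangeI span_base span_mul)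
  qed
  have rk: "rank (Jac A a \<alpha> x) = dim (span (range g))"
  proof -
    have "rank (Jac A a \<alpha> x) = rank (matrix D)" by (simp add: Jac_def jac rank_transpose)
    also have "\<dots> = dim (rows (matrix D))" by (rule row_rank_def)
    also have "\<dots> = dim (span (range (\<lambda>i. 2 *\<^sub>R g i)))" by (simp add: rowsD dim_span)
    finally show ?thesis by (simp add: spans)
  qed
  have W0eq: "{y \<in> UNIV. \<forall>z \<in> span (range g). orthogonal z y} = Q.W0"
  proof (intro set_eqI iffI)
    fix y assume "y \<in> {y \<in> UNIV. \<forall>z \<in> span (range g). orthogonal z y}"
    then show "y \<in> Q.W0" by (auto simp: Q.W0_def orthogonal_def intro: span_base)
  next
    fix y assume y: "y \<in> Q.W0"
    show "y \<in> {y \<in> UNIV. \<forall>z \<in> span (range g). orthogonal z y}"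
    proof -
      have "orthogonal z y" if z: "z \<in> span (range g)" for z
      proof -
        have "orthogonal y z"
          by (rule orthogonal_to_span[OF z]) (use y in \<open>auto simp: Q.W0_def orthogonal_def inner_commute\<close>)
        then show ?thesis by (simp add: orthogonal_commute)
      qed
      then show ?thesis by simp
    qed
  qed
  have "dim Q.W0 + dim (span (range g)) = CARD('n)"
    using dim_subspace_orthogonal_to_vectors[of "span (range g)" UNIV] W0eq
    by (simp add: dim_UNIV)
  moreover have "dim (span (range g)) = CARD('n) - d"
    using regular rk by (simp add: local_codim_def d_def V_def)
  ultimately have dimW0: "dim Q.W0 \<le> d" using dle by simp
  have allV: "\<And>w. w \<in> Q.W0 \<Longrightarrow> w \<in> ball (Q.Pr x) \<delta> \<Longrightarrow> I.Psi w \<in> variety A a \<alpha>"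
    by (rule I.all_V[OF dimW0 Pd[unfolded P_def V_def]])
  show ?thesis by (rule I.nbhd[OF allV])
qed

end
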